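(* Let $\Omega$ be a finite set and let $f_1,\ldots,f_n\in\mathbb{R}^{\Omega}$ be gambles. Let $$\mathcal M=\{p\in\mathbb{R}^{\Omega}: p\cdot f_i\ge 0 \text{ for } i=1,\ldots,n,\ p\cdot 1_\Omega=1\}$$ be a nonempty credal set (a nonempty, closed, convex set of probability mass vectors). Let $E\in\mathcal M$, let $I=\{i: E\cdot f_i=0\}$, and for $i\in I$ let $f'_i=f_i-\frac{f_i\cdot 1_\Omega}{|\Omega|}1_\Omega$ (so that $f_i-f'_i$ is constant and $f'_i\cdot 1_\Omega=0$). For $\underline{\alpha}=(\alpha_i)_{i\in I}$ with $\alpha_i\ge 0$ and $\beta\in\mathbb{R}$ put $h(\underline{\alpha},\beta)=\sum_{i\in I}\alpha_i f'_i+\beta 1_\Omega$. Let $P$ be a linear prevision (probability mass vector) on $\Omega$. Then $$\max_{(\underline{\alpha},\beta)}\frac{|E\cdot h(\underline{\alpha},\beta)-P\cdot h(\underline{\alpha},\beta)|}{\|h(\underline{\alpha},\beta)\|}=\max_{\underline{\alpha}}\frac{|E\cdot h(\underline{\alpha},0)-P\cdot h(\underline{\alpha},0)|}{\|h(\underline{\alpha},0)\|},$$ where the maxima range over those parameters for which the denominator is nonzero.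
   Context: $f\cdot g=\sum_{x\in\Omega}f(x)g(x)$ is the standard inner product on $\mathbb{R}^{\Omega}$, $\|f\|=\sqrt{f\cdot f}$ the Euclidean norm, and $1_\Omega$ the constant vector $1$. A linear prevision is identified with a probability mass vector $P$ and acts on gambles by $P(f)=P\cdot f$. *)

theory Defs
  imports "HOL-Analysis.Analysis"
begin

text \<open>Gambles and mass vectors on a finite set Omega are vectors of type real^'w,
  with 'w a finite type playing the role of Omega. The inner product is the library's
  (standard) one, the norm is the Euclidean norm, and 1 :: real^'w is the constant vector 1.\<close>

definition credal_set :: "nat \<Rightarrow> (nat \<Rightarrow> real^'w::finite) \<Rightarrow> (real^'w) set" where
  "credal_set n f = {p. (\<forall>i<n. p \<bullet> f i \<ge> 0) \<and> p \<bullet> 1 = 1}"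

definition centered :: "real^'w::finite \<Rightarrow> real^'w" where
  "centered g = g - ((g \<bullet> 1) / real CARD('w)) *\<^sub>R 1"

definition hvec :: "nat set \<Rightarrow> (nat \<Rightarrow> real^'w::finite) \<Rightarrow> (nat \<Rightarrow> real) \<Rightarrow> real \<Rightarrow> real^'w" where
  "hvec I f \<alpha> \<beta> = (\<Sum>i\<in>I. \<alpha> i *\<^sub>R centered (f i)) + \<beta> *\<^sub>R 1"

definition dev_ratio :: "real^'w::finite \<Rightarrow> real^'w \<Rightarrow> real^'w \<Rightarrow> real" where
  "dev_ratio E P g = \<bar>E \<bullet> g - P \<bullet> g\<bar> / norm g"

definition is_prob_mass :: "real^'w::finite \<Rightarrow> bool" where
  "is_prob_mass p \<longleftrightarrow> (\<forall>x. p $ x \<ge> 0) \<and> (\<Sum>x\<in>UNIV. p $ x) = 1"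

end

theory Submission
  imports Defs
begin

lemma one_inner_one: "(1::real^'w::finite) \<bullet> 1 = real CARD('w)"
  by (simp add: inner_vec_def)

lemma centered_orth: "centered (g::real^'w::finite) \<bullet> 1 = 0"
  by (simp add: centered_def inner_diff_left one_inner_one)

lemma sum_orth: "(\<Sum>i\<in>I. a i *\<^sub>R centered (f i)) \<bullet> (1::real^'w::finite) = 0"
  by (simp add: inner_sum_left centered_orth)

lemma sum_in_hull:
  assumes "finite J" "J \<subseteq> I" "\<forall>i\<in>J. a i \<ge> 0"
  shows "(\<Sum>i\<in>J. a i *\<^sub>R g i) \<in> convex_cone hull (g ` I)"
  using assms
proof (induction J rule: finite_induct)
  case empty
  then show ?case by (simp add: convex_cone_hull_contains_0)
next
  case (insert x F)
  have "g x \<in> convex_cone hull (g ` I)" using insert by (intro hull_inc) auto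
  then have "a x *\<^sub>R g x \<in> convex_cone hull (g ` I)" using insert by (intro convex_cone_hull_mul) auto
  then show ?case using insert by (simp add: convex_cone_hull_add)
qed

lemma K_hull:
  fixes g :: "nat \<Rightarrow> 'a::real_vector"
  assumes "finite I"
  shows "{\<Sum>i\<in>I. a i *\<^sub>R g i | a. \<forall>i\<in>I. 0 \<le> a i} = convex_cone hull (g ` I)"
    (is "?K = _")
proof
  show "?K \<subseteq> convex_cone hull (g ` I)"
    using sum_in_hull[OF assms] by blast
next
  have cc: "convex_cone ?K"
    unfolding convex_cone_iff
  proof (intro conjI ballI allI impI)
    show "0 \<in> ?K" by (rule CollectI, rule exI[of _ "\<lambda>_. 0"]) simp
  next
    fix x y assume "x \<in> ?K" "y \<in> ?K"
    then obtain a b where "x = (\<Sum>i\<in>I. a i *\<^sub>R g i)" "\<forall>i\<in>I. 0 \<le> a i"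
      "y = (\<Sum>i\<in>I. b i *\<^sub>R g i)" "\<forall>i\<in>I. 0 \<le> b i" by blast
    then show "x + y \<in> ?K"
      by (intro CollectI exI[of _ "\<lambda>i. a i + b i"]) (simp add: scaleR_add_left sum.distrib)
  next
    fix x and c :: real assume "x \<in> ?K" "0 \<le> c"
    then obtain a where "x = (\<Sum>i\<in>I. a i *\<^sub>R g i)" "\<forall>i\<in>I. 0 \<le> a i" by blast
    then show "c *\<^sub>R x \<in> ?K" using \<open>0 \<le> c\<close>
      by (intro CollectI exI[of _ "\<lambda>i. c * a i"]) (simp add: scaleR_sum_right)
  qed
  have "g ` I \<subseteq> ?K"
  proof
    fix y assume "y \<in> g ` I"
    then obtain j where j: "j \<in> I" "y = g j" by blast
    have "(\<Sum>i\<in>I. (if i = j then 1 else 0) *\<^sub>R g i) = (\<Sum>i\<in>I. if i = j then g i else 0)"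
      by (rule sum.cong) auto
    also have "\<dots> = g j" using j assms by (simp add: sum.delta)
    finally have "(\<Sum>i\<in>I. (if i = j then 1 else 0) *\<^sub>R g i) = g j" .
    then show "y \<in> ?K" using j
      by (intro CollectI exI[of _ "\<lambda>i. if i = j then 1 else 0"]) auto
  qed
  then show "convex_cone hull (g ` I) \<subseteq> ?K"
    using cc by (rule hull_minimal)
qed

theorem corollary4:
  fixes n :: nat and f :: "nat \<Rightarrow> real^'w::finite" and E P :: "real^'w"
    and I :: "nat set"
  assumes M_nonempty: "credal_set n f \<noteq> {}"
    and M_prob: "\<forall>p\<in>credal_set n f. is_prob_mass p"
    and E_in: "E \<in> credal_set n f"
    and I_def: "I = {i. i < n \<and> E \<bullet> f i = 0}"
    and P_prob: "is_prob_mass P"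
    and nondeg: "\<exists>\<alpha>. (\<forall>i\<in>I. \<alpha> i \<ge> 0) \<and> hvec I f \<alpha> 0 \<noteq> 0"
  shows "\<exists>m.
     m \<in> {dev_ratio E P (hvec I f \<alpha> \<beta>) | \<alpha> \<beta>. (\<forall>i\<in>I. \<alpha> i \<ge> 0) \<and> hvec I f \<alpha> \<beta> \<noteq> 0}
   \<and> (\<forall>x\<in>{dev_ratio E P (hvec I f \<alpha> \<beta>) | \<alpha> \<beta>. (\<forall>i\<in>I. \<alpha> i \<ge> 0) \<and> hvec I f \<alpha> \<beta> \<noteq> 0}. x \<le> m)
   \<and> m \<in> {dev_ratio E P (hvec I f \<alpha> 0) | \<alpha>. (\<forall>i\<in>I. \<alpha> i \<ge> 0) \<and> hvec I f \<alpha> 0 \<noteq> 0}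
   \<and> (\<forall>x\<in>{dev_ratio E P (hvec I f \<alpha> 0) | \<alpha>. (\<forall>i\<in>I. \<alpha> i \<ge> 0) \<and> hvec I f \<alpha> 0 \<noteq> 0}. x \<le> m)"
proof -
  define g where "g i = centered (f i)" for i
  define c where "c = E - P"
  define G where "G a = (\<Sum>i\<in>I. a i *\<^sub>R g i)" for a
  have finI: "finite I" unfolding I_def by auto
  have h0: "hvec I f a 0 = G a" for a by (simp add: hvec_def G_def g_def)
  have hb: "hvec I f a b = G a + b *\<^sub>R 1" for a b by (simp add: hvec_def G_def g_def)
  have G1: "G a \<bullet> 1 = 0" for a unfolding G_def g_def by (rule sum_orth)
  have E1: "E \<bullet> 1 = 1" using E_in by (simp add: credal_set_def)
  have P1: "P \<bullet> 1 = 1" using P_prob by (simp add: is_prob_mass_def inner_vec_def)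
  have c1: "c \<bullet> 1 = 0" by (simp add: c_def inner_diff_left E1 P1)
  have dev: "dev_ratio E P v = \<bar>c \<bullet> v\<bar> / norm v" for v
    by (simp add: dev_ratio_def c_def inner_diff_left)
  have num: "c \<bullet> (G a + b *\<^sub>R 1) = c \<bullet> G a" for a b
    by (simp add: inner_add_right c1)
  have nrm: "norm (G a) \<le> norm (G a + b *\<^sub>R 1)" for a b
  proof -
    have "(norm (G a + b *\<^sub>R 1))\<^sup>2 = (norm (G a))\<^sup>2 + b\<^sup>2 * real CARD('w)"
    proof -
      have "1 \<bullet> G a = 0" using G1[of a] by (simp add: inner_commute)
      then have "(G a + b *\<^sub>R 1) \<bullet> (G a + b *\<^sub>R 1) = G a \<bullet> G a + b * b * ((1::real^'w) \<bullet> 1)"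
        by (simp add: inner_add_left inner_add_right G1)
      then show ?thesis by (metis power2_norm_eq_inner one_inner_one power2_eq_square)
    qed
    then have "(norm (G a))\<^sup>2 \<le> (norm (G a + b *\<^sub>R 1))\<^sup>2" by simp
    then show ?thesis using power2_le_imp_le by fastforce
  qed
  define K where "K = {G a | a. \<forall>i\<in>I. 0 \<le> a i}"
  have K_eq: "K = convex_cone hull (g ` I)"
    unfolding K_def G_def by (rule K_hull[OF finI])
  have closedK: "closed K" unfolding K_eq by (rule closed_convex_cone_hull) (use finI in auto)
  define S where "S = K \<inter> sphere 0 1"
  have compS: "compact S" unfolding S_def
    by (intro closed_Int_compact closedK compact_sphere)
  obtain a0 where a0: "\<forall>i\<in>I. a0 i \<ge> 0" "G a0 \<noteq> 0" using nondeg h0 by auto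
  have scaleK: "t *\<^sub>R G a \<in> K" if "\<forall>i\<in>I. a i \<ge> 0" "t \<ge> 0" for a t
  proof -
    have "t *\<^sub>R G a = G (\<lambda>i. t * a i)" by (simp add: G_def scaleR_sum_right)
    then show ?thesis unfolding K_def using that by auto
  qed
  have inS: "(1 / norm (G a)) *\<^sub>R G a \<in> S" if "\<forall>i\<in>I. a i \<ge> 0" "G a \<noteq> 0" for a
    using scaleK[OF that(1), of "1 / norm (G a)"] that(2) by (simp add: S_def)
  have Sne: "S \<noteq> {}" using inS[OF a0] by auto
  have cont: "continuous_on S (\<lambda>x. \<bar>c \<bullet> x\<bar>)" by (intro continuous_intros)
  obtain x0 where x0: "x0 \<in> S" "\<forall>y\<in>S. \<bar>c \<bullet> y\<bar> \<le> \<bar>c \<bullet> x0\<bar>"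
    using continuous_attains_sup[OF compS Sne cont] by blast
  obtain b0 where b0: "\<forall>i\<in>I. 0 \<le> b0 i" "x0 = G b0" "norm (G b0) = 1"
    using x0(1) by (auto simp: S_def K_def)
  define m where "m = \<bar>c \<bullet> x0\<bar>"
  have bound0: "\<bar>c \<bullet> G a\<bar> / norm (G a) \<le> m" if "\<forall>i\<in>I. a i \<ge> 0" "G a \<noteq> 0" for a
  proof -
    have "\<bar>c \<bullet> ((1 / norm (G a)) *\<^sub>R G a)\<bar> \<le> m" using x0(2) inS[OF that] unfolding m_def by blast
    then show ?thesis by (simp add: abs_mult)
  qed
  have m0: "0 \<le> m" by (simp add: m_def)
  have mem0: "m \<in> {dev_ratio E P (hvec I f \<alpha> 0) | \<alpha>. (\<forall>i\<in>I. \<alpha> i \<ge> 0) \<and> hvec I f \<alpha> 0 \<noteq> 0}"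
    using b0 by (intro CollectI exI[of _ b0]) (auto simp: dev h0 m_def)
  have memb: "m \<in> {dev_ratio E P (hvec I f \<alpha> \<beta>) | \<alpha> \<beta>. (\<forall>i\<in>I. \<alpha> i \<ge> 0) \<and> hvec I f \<alpha> \<beta> \<noteq> 0}"
    using b0 by (intro CollectI exI[of _ b0] exI[of _ 0]) (auto simp: dev h0 m_def)
  have allb: "\<forall>x\<in>{dev_ratio E P (hvec I f \<alpha> \<beta>) | \<alpha> \<beta>. (\<forall>i\<in>I. \<alpha> i \<ge> 0) \<and> hvec I f \<alpha> \<beta> \<noteq> 0}. x \<le> m"
  proof safe
    fix a b assume a: "\<forall>i\<in>I. 0 \<le> a i" and "hvec I f a b \<noteq> 0"
    show "dev_ratio E P (hvec I f a b) \<le> m"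
    proof (cases "G a = 0")
      case True
      then show ?thesis using m0 by (simp add: dev hb num c1)
    next
      case False
      have "\<bar>c \<bullet> G a\<bar> / norm (G a + b *\<^sub>R 1) \<le> \<bar>c \<bullet> G a\<bar> / norm (G a)"
        using False nrm[of a b] by (intro divide_left_mono) (auto intro!: mult_pos_pos)
      also have "\<dots> \<le> m" using bound0[OF a False] .
      finally show ?thesis by (simp add: dev hb num)
    qed
  qed
  have all0: "\<forall>x\<in>{dev_ratio E P (hvec I f \<alpha> 0) | \<alpha>. (\<forall>i\<in>I. \<alpha> i \<ge> 0) \<and> hvec I f \<alpha> 0 \<noteq> 0}. x \<le> m"
    using bound0 by (auto simp: dev h0)
  show ?thesis using mem0 memb allb all0 by blast
qed

end
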